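(* Let $X$ be a $d$-complex, $-1\le i\le k<d$, $A\in C^k$ and $0<\eta<1$. Let $\sigma\in S^i_\eta(A)$, $t\in L_\eta(A,\sigma)$, $t'\in A$, and $p\in X(k+1)$ with $t\subset p$ and $t'\subset p$. Then either $t'\cap\sigma$ is a fat face (i.e. $t'\cap\sigma\in S^{|t'\cap\sigma|-1}_\eta(A)$) and $t'\in L_\eta(A,t'\cap\sigma)$, or $p\in\Upsilon_\eta(A)$.
   Context: A $d$-complex is a finite pure $d$-dimensional simplicial complex $X$ (faces are vertex sets, $\emptyset$ is the unique $(-1)$-face, $|\sigma|$ = number of vertices); $X(k)$ = set of $k$-faces; $C^k$ = $\mathbb{F}_2$-cochains identified with subsets of $X(k)$. Weight $w(\sigma)=\frac{|\{F\in X(d):\sigma\subset F\}|}{\binom{d+1}{|\sigma|}|X(d)|}$, norm $\|A\|=\sum_{\sigma\in A}w(\sigma)$. Link $X_\sigma=\{\tau\in X:\tau\cap\sigma=\emptyset,\tau\cup\sigma\in X\}$ with own norm $\|\cdot\|_\sigma$; localization $I_\sigma(A)=\{\tau\in X_\sigma:\tau\sqcup\sigma\in A\}$. Fat faces: $S^k_\eta(A)=A$ and for $i=k,\dots,0$, $S^{i-1}_\eta(A)=\{\sigma\in X(i-1):\|I_\sigma(S^i_\eta(A))\|_\sigma\ge\eta^{2^{k-i}}\}$. A dead-end is a pair $(\sigma,\sigma')$ with $\sigma,\sigma'\in S^j_\eta(A)$ for some $j$, $|\sigma\cap\sigma'|=|\sigma|-1$, and $\sigma\cap\sigma'\notin S^{j-1}_\eta(A)$;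 $\Upsilon_\eta(A)\subset X(k+1)$ is the set of $(k+1)$-faces containing $\sigma\cup\sigma'$ for some dead-end. For $\sigma\in S^i_\eta(A)$, $L_\eta(A,\sigma)=\{t\in A:\exists\,\sigma=\sigma_i\subset\dots\subset\sigma_k=t,\ \sigma_j\in S^j_\eta(A)\ \forall j\}$. *)

theory Defs
  imports Main "HOL-Library.Discrete_Functions" Complex_Main
begin

text \<open>Simplicial complexes are sets of (finite) vertex sets; dimensions are integers
  so that the empty face has dimension -1.\<close>

definition d_complex :: "'v set set \<Rightarrow> int \<Rightarrow> bool" where
  "d_complex X d \<longleftrightarrow> finite X \<and> d \<ge> -1 \<and> {} \<in> X \<and>
     (\<forall>\<sigma>\<in>X. finite \<sigma> \<and> int (card \<sigma>) \<le> d + 1) \<and>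
     (\<forall>\<sigma>\<in>X. \<forall>\<tau>. \<tau> \<subseteq> \<sigma> \<longrightarrow> \<tau> \<in> X) \<and>
     (\<forall>\<sigma>\<in>X. \<exists>F\<in>X. \<sigma> \<subseteq> F \<and> int (card F) = d + 1)"

definition faces :: "'v set set \<Rightarrow> int \<Rightarrow> 'v set set" where
  "faces X k = {\<sigma>\<in>X. int (card \<sigma>) = k + 1}"

definition wt :: "'v set set \<Rightarrow> int \<Rightarrow> 'v set \<Rightarrow> real" where
  "wt X d \<sigma> = real (card {F\<in>faces X d. \<sigma> \<subseteq> F}) /
      (real (nat (d + 1) choose card \<sigma>) * real (card (faces X d)))"

definition cnorm :: "'v set set \<Rightarrow> int \<Rightarrow> 'v set set \<Rightarrow> real" where
  "cnorm X d A = (\<Sum>\<sigma>\<in>A. wt X d \<sigma>)"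

definition link :: "'v set set \<Rightarrow> 'v set \<Rightarrow> 'v set set" where
  "link X \<sigma> = {\<tau>\<in>X. \<tau> \<inter> \<sigma> = {} \<and> \<tau> \<union> \<sigma> \<in> X}"

text \<open>Norm in the link of \<sigma>, which is a (d - |\<sigma>|)-complex.\<close>
definition lnorm :: "'v set set \<Rightarrow> int \<Rightarrow> 'v set \<Rightarrow> 'v set set \<Rightarrow> real" where
  "lnorm X d \<sigma> B = cnorm (link X \<sigma>) (d - int (card \<sigma>)) B"

definition loc :: "'v set set \<Rightarrow> 'v set \<Rightarrow> 'v set set \<Rightarrow> 'v set set" where
  "loc X \<sigma> A = {\<tau>\<in>link X \<sigma>. \<tau> \<union> \<sigma> \<in> A}"

text \<open>fat_aux m = S^{k-m}_\<eta>(A).\<close>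
fun fat_aux :: "'v set set \<Rightarrow> int \<Rightarrow> real \<Rightarrow> int \<Rightarrow> 'v set set \<Rightarrow> nat \<Rightarrow> 'v set set" where
  "fat_aux X d \<eta> k A 0 = A"
| "fat_aux X d \<eta> k A (Suc m) =
     {\<sigma>\<in>faces X (k - int m - 1).
        lnorm X d \<sigma> (loc X \<sigma> (fat_aux X d \<eta> k A m)) \<ge> \<eta> ^ (2 ^ m)}"

definition fat :: "'v set set \<Rightarrow> int \<Rightarrow> real \<Rightarrow> int \<Rightarrow> 'v set set \<Rightarrow> int \<Rightarrow> 'v set set" where
  "fat X d \<eta> k A j = (if j \<le> k then fat_aux X d \<eta> k A (nat (k - j)) else {})"

definition dead_end :: "'v set set \<Rightarrow> int \<Rightarrow> real \<Rightarrow> int \<Rightarrow> 'v set set \<Rightarrow> 'v set \<Rightarrow> 'v set \<Rightarrow> bool" where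
  "dead_end X d \<eta> k A \<sigma> \<sigma>' \<longleftrightarrow> (\<exists>j. \<sigma> \<in> fat X d \<eta> k A j \<and> \<sigma>' \<in> fat X d \<eta> k A j \<and>
     int (card (\<sigma> \<inter> \<sigma>')) = int (card \<sigma>) - 1 \<and> \<sigma> \<inter> \<sigma>' \<notin> fat X d \<eta> k A (j - 1))"

definition Upsilon :: "'v set set \<Rightarrow> int \<Rightarrow> real \<Rightarrow> int \<Rightarrow> 'v set set \<Rightarrow> 'v set set" where
  "Upsilon X d \<eta> k A = {p\<in>faces X (k + 1). \<exists>\<sigma> \<sigma>'. dead_end X d \<eta> k A \<sigma> \<sigma>' \<and> \<sigma> \<union> \<sigma>' \<subseteq> p}"

definition Lset :: "'v set set \<Rightarrow> int \<Rightarrow> real \<Rightarrow> int \<Rightarrow> 'v set set \<Rightarrow> int \<Rightarrow> 'v set \<Rightarrow> 'v set set" where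
  "Lset X d \<eta> k A i \<sigma> = {t\<in>A. \<exists>c :: int \<Rightarrow> 'v set. c i = \<sigma> \<and> c k = t \<and>
      (\<forall>j. i \<le> j \<and> j \<le> k \<longrightarrow> c j \<in> fat X d \<eta> k A j) \<and>
      (\<forall>j. i \<le> j \<and> j < k \<longrightarrow> c j \<subset> c (j + 1))}"

end

theory Submission
  imports Defs
begin

lemma fat_faces:
  assumes "x \<in> fat X d \<eta> k A j" "A \<subseteq> faces X k"
  shows "x \<in> faces X j \<and> j \<le> k"
proof -
  have jk: "j \<le> k" using assms(1) by (auto simp: fat_def split: if_splits)
  show ?thesis
  proof (cases "nat (k - j)")
    case 0
    then have "j = k" using jk by simp
    then show ?thesis using assms 0 by (auto simp: fat_def)
  next
    case (Suc m)
    then have e: "k - int m - 1 = j" using jk by simp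
    show ?thesis using assms(1) Suc jk by (auto simp: fat_def e)
  qed
qed

lemma fat_top: "fat X d \<eta> k A k = A"
  by (simp add: fat_def)

lemma dead_lemma:
  assumes "a \<in> fat X d \<eta> k A l" "b \<in> fat X d \<eta> k A l"
    "int (card (a \<inter> b)) = int (card a) - 1" "a \<union> b \<subseteq> p" "p \<in> faces X (k+1)"
  shows "a \<inter> b \<in> fat X d \<eta> k A (l - 1) \<or> p \<in> Upsilon X d \<eta> k A"
  using assms unfolding Upsilon_def dead_end_def by blast

lemma prepend:
  assumes "t' \<in> Lset X d \<eta> k A l g" "h \<in> fat X d \<eta> k A (l - 1)" "h \<subset> g" "l \<le> k"
  shows "t' \<in> Lset X d \<eta> k A (l - 1) h"
proof -
  obtain c where c: "t' \<in> A" "c l = g" "c k = t'"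
    "\<forall>j. l \<le> j \<and> j \<le> k \<longrightarrow> c j \<in> fat X d \<eta> k A j"
    "\<forall>j. l \<le> j \<and> j < k \<longrightarrow> c j \<subset> c (j + 1)"
    using assms(1) unfolding Lset_def by blast
  define c' where "c' = c(l - 1 := h)"
  have "c' (l - 1) = h" "c' k = t'" using c assms(4) by (auto simp: c'_def)
  moreover have "\<forall>j. l - 1 \<le> j \<and> j \<le> k \<longrightarrow> c' j \<in> fat X d \<eta> k A j"
  proof (intro allI impI)
    fix j assume "l - 1 \<le> j \<and> j \<le> k"
    then show "c' j \<in> fat X d \<eta> k A j"
      using c assms(2) by (cases "j = l - 1") (auto simp: c'_def)
  qed
  moreover have "\<forall>j. l - 1 \<le> j \<and> j < k \<longrightarrow> c' j \<subset> c' (j + 1)"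
  proof (intro allI impI)
    fix j assume "l - 1 \<le> j \<and> j < k"
    then show "c' j \<subset> c' (j + 1)"
      using c assms(3) by (cases "j = l - 1") (auto simp: c'_def)
  qed
  ultimately show ?thesis using c(1) unfolding Lset_def by blast
qed

lemma trivL: "t' \<in> A \<Longrightarrow> t' \<in> Lset X d \<eta> k A k t'"
  unfolding Lset_def by (auto simp: fat_top intro!: exI[of _ "\<lambda>_. t'"])

lemma chain_sub:
  assumes "\<forall>j. a \<le> j \<and> j < b \<longrightarrow> c j \<subseteq> c (j + 1)"
  shows "a \<le> j \<Longrightarrow> j \<le> b \<Longrightarrow> c j \<subseteq> c (b::int)"
proof (induction "nat (b - j)" arbitrary: j)
  case 0 then show ?case by simp
next
  case (Suc n)
  then have "c (j+1) \<subseteq> c b" by simp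
  moreover have "c j \<subseteq> c (j+1)" using assms Suc.prems Suc.hyps(2) by simp
  ultimately show ?case by blast
qed

lemma card_cut:
  assumes "finite p" "t' \<subseteq> p" "card (p - t') = 1" "x \<subseteq> p" "\<not> x \<subseteq> t'"
  shows "int (card (x \<inter> t')) = int (card x) - 1"
proof -
  have fx: "finite x" using assms finite_subset by blast
  have "x - t' \<subseteq> p - t'" using assms by blast
  then have "card (x - t') \<le> 1" using assms card_mono by (metis finite_Diff)
  moreover have "x - t' \<noteq> {}" using assms by blast
  then have "card (x - t') \<ge> 1" using fx by (simp add: Suc_leI card_gt_0_iff)
  ultimately have "card (x - t') = 1" by simp
  moreover have "card (x - t') = card x - card (x \<inter> t')"
    using fx by (simp add: card_Diff_subset_Int)
  moreover have "card (x \<inter> t') \<le> card x" using fx by (simp add: card_mono)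
  moreover have "card (x \<inter> t') \<noteq> card x"
  proof
    assume "card (x \<inter> t') = card x"
    then have "x \<inter> t' = x" using fx card_subset_eq[of x "x \<inter> t'"] by blast
    then show False using assms(5) by blast
  qed
  ultimately show ?thesis by linarith
qed

theorem mainTheorem9:
  fixes X :: "'v set set" and d i k :: int and A :: "'v set set" and \<eta> :: real
    and \<sigma> t t' p :: "'v set"
  assumes "d_complex X d"
    and "-1 \<le> i" and "i \<le> k" and "k < d"
    and "A \<subseteq> faces X k"
    and "0 < \<eta>" and "\<eta> < 1"
    and "\<sigma> \<in> fat X d \<eta> k A i"
    and "t \<in> Lset X d \<eta> k A i \<sigma>"
    and "t' \<in> A"
    and "p \<in> faces X (k + 1)" and "t \<subseteq> p" and "t' \<subseteq> p"
  shows "(t' \<inter> \<sigma> \<in> fat X d \<eta> k A (int (card (t' \<inter> \<sigma>)) - 1) \<and>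
          t' \<in> Lset X d \<eta> k A (int (card (t' \<inter> \<sigma>)) - 1) (t' \<inter> \<sigma>))
         \<or> p \<in> Upsilon X d \<eta> k A"
proof -
  let ?F = "fat X d \<eta> k A"
  let ?L = "Lset X d \<eta> k A"
  let ?U = "p \<in> Upsilon X d \<eta> k A"
  obtain c where c: "t \<in> A" "c i = \<sigma>" "c k = t"
    "\<forall>j. i \<le> j \<and> j \<le> k \<longrightarrow> c j \<in> ?F j"
    "\<forall>j. i \<le> j \<and> j < k \<longrightarrow> c j \<subset> c (j + 1)"
    using assms(9) unfolding Lset_def by blast
  have fp: "finite p" using assms(1,11) unfolding d_complex_def faces_def by auto
  have cp: "int (card p) = k + 2" using assms(11) unfolding faces_def by auto
  have ct': "int (card t') = k + 1" using assms(5,10) unfolding faces_def by auto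
  have ft': "finite t'" using fp assms(13) finite_subset by blast
  have cpt: "card (p - t') = 1" using card_Diff_subset[OF ft' assms(13)] cp ct' by linarith
  have cj: "int (card (c j)) = j + 1" if "i \<le> j" "j \<le> k" for j
    using fat_faces[OF _ assms(5), of "c j" d \<eta> j] c(4) that unfolding faces_def by auto
  have csub: "c j \<subseteq> t" if "i \<le> j" "j \<le> k" for j
    using chain_sub[of i k c j] c(3,5) that by auto
  have cut: "int (card (x \<inter> t')) = int (card x) - 1" if "x \<subseteq> p" "\<not> x \<subseteq> t'" for x
    using card_cut[OF fp assms(13) cpt that] .
  define Q where "Q j \<longleftrightarrow> (c j \<inter> t' \<in> ?F (int (card (c j \<inter> t')) - 1) \<and>
      t' \<in> ?L (int (card (c j \<inter> t')) - 1) (c j \<inter> t'))" for j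
  have trL: "t' \<in> ?L k t'" using trivL[OF assms(10)] .
  have base: "Q k \<or> ?U"
  proof (cases "t \<subseteq> t'")
    case True
    have "card t = card t'" using cj[of k] ct' c(3) assms(3) by simp
    then have "t = t'" using True card_subset_eq[OF ft' True] by simp
    then show ?thesis using c(3) trL assms(10) ct' by (simp add: Q_def fat_top)
  next
    case False
    have ci: "int (card (t \<inter> t')) = int (card t) - 1" using cut[OF assms(12) False] .
    have ct: "int (card t) = k + 1" using cj[of k] c(3) assms(3) by simp
    have "t \<inter> t' \<in> ?F (k - 1) \<or> ?U"
    proof -
      have tF: "t \<in> ?F k" "t' \<in> ?F k" using c(1) assms(10) by (simp_all add: fat_top)
      have un: "t \<union> t' \<subseteq> p" using assms(12,13) by blast
      from dead_lemma[OF tF ci un assms(11)] show ?thesis .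
    qed
    moreover have "t' \<in> ?L (k - 1) (t \<inter> t')" if "t \<inter> t' \<in> ?F (k - 1)"
    proof -
      have "t \<inter> t' \<noteq> t'"
      proof
        assume "t \<inter> t' = t'"
        then have "int (card (t \<inter> t')) = int (card t')" by (simp only:)
        with ci ct ct' show False by linarith
      qed
      then have "t \<inter> t' \<subset> t'" by blast
      from prepend[OF trL that this order_refl] show ?thesis .
    qed
    ultimately show ?thesis using ci ct c(3) by (auto simp: Q_def)
  qed
  have step: "Q j \<or> ?U" if "i \<le> j" "j < k" "Q (j + 1) \<or> ?U" for j
  proof (cases ?U)
    case True then show ?thesis by simp
  next
    case nU: False
    then have Q1: "Q (j + 1)" using that by simp
    let ?g = "c (j + 1) \<inter> t'"
    let ?h = "c j \<inter> t'"
    have gF: "?g \<in> ?F (int (card ?g) - 1)" and gL: "t' \<in> ?L (int (card ?g) - 1) ?g"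
      using Q1 by (auto simp: Q_def)
    have sj: "c j \<subset> c (j + 1)" using c(5) that by simp
    have cjj: "int (card (c j)) = j + 1" using cj that by simp
    have cj1: "int (card (c (j+1))) = j + 2" using cj[of "j+1"] that by simp
    have pj: "c (j+1) \<subseteq> p" using csub[of "j+1"] that assms(12) by simp
    have pj0: "c j \<subseteq> p" using csub[of j] that assms(12) by simp
    have fj: "c j \<in> ?F j" using c(4) that by simp
    show ?thesis
    proof (cases "c j \<subseteq> t'")
      case True
      then have he: "?h = c j" by blast
      show ?thesis
      proof (cases "c (j+1) \<subseteq> t'")
        case True2: True
        then have geq: "?g = c (j+1)" by blast
        then have e: "int (card ?g) - 1 = j + 1" using cj1 by simp
        from gL have "t' \<in> ?L (j + 1) ?g" by (simp only: e)
        then have "t' \<in> ?L (j + 1) (c (j+1))" by (simp only: geq)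
        then have "t' \<in> ?L j (c j)" using prepend[of t' X d \<eta> k A "j+1" "c (j+1)" "c j"] fj sj that
          by simp
        then show ?thesis using he fj cjj by (simp add: Q_def)
      next
        case False
        have "int (card ?g) = j + 1" using cut[OF pj False] cj1 by simp
        moreover have "c j \<subseteq> ?g" using True sj by blast
        moreover have "finite ?g" using ft' by simp
        ultimately have "?g = c j" using cjj card_subset_eq[of ?g "c j"] by simp
        then show ?thesis using gF gL he by (simp add: Q_def)
      qed
    next
      case False
      have False1: "\<not> c (j+1) \<subseteq> t'" using False sj by blast
      have cg: "int (card ?g) = j + 1" using cut[OF pj False1] cj1 by simp
      have ch: "int (card ?h) = j" using cut[OF pj0 False] cjj by simp
      have hg: "c j \<inter> ?g = ?h" using sj by blast
      have gFj: "?g \<in> ?F j" using gF cg by simp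
      have ci2: "int (card (c j \<inter> ?g)) = int (card (c j)) - 1" using hg ch cjj by simp
      have un: "c j \<union> ?g \<subseteq> p" using pj pj0 by blast
      have "c j \<inter> ?g \<in> ?F (j - 1) \<or> ?U"
        by (rule dead_lemma[OF fj gFj ci2 un assms(11)])
      then have "?h \<in> ?F (j - 1) \<or> ?U" using hg by simp
      then have hF: "?h \<in> ?F (j - 1)" using nU by simp
      have "?h \<subseteq> ?g" using sj by blast
      moreover have "?h \<noteq> ?g" using cg ch by auto
      ultimately have "?h \<subset> ?g" by blast
      then have "t' \<in> ?L (j - 1) ?h"
        using prepend[of t' X d \<eta> k A "j" ?g ?h] gL cg hF that by simp
      then show ?thesis using hF ch by (simp add: Q_def)
    qed
  qed
  have all: "int n \<le> k - i \<Longrightarrow> Q (k - int n) \<or> ?U" for n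
  proof (induction n)
    case 0 then show ?case using base by simp
  next
    case (Suc n)
    then have "Q (k - int n) \<or> ?U" by simp
    then show ?case using step[of "k - int (Suc n)"] Suc.prems by (simp add: algebra_simps)
  qed
  have "Q i \<or> ?U" using all[of "nat (k - i)"] assms(3) by simp
  moreover have "c i \<inter> t' = t' \<inter> \<sigma>" using c(2) by blast
  ultimately show ?thesis unfolding Q_def by simp
qed

end
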